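(* Let $G=\mathbb Z\wr\mathbb Z=\langle a\rangle\wr\langle b\rangle$. Then $\mathrm{pw}(G,\{a,b\})=3$.
   Context: $a$ generates the first (base) infinite cyclic factor and $b$ the second (acting) infinite cyclic factor of the restricted wreath product. A palindrome in a group generated by $X$ is an element represented by a reduced word in $X^{\pm1}$ reading the same forwards and backwards; $l_{\mathcal P}(g)$ is the minimal number of palindromes whose product is $g$; $\mathrm{pw}(G,X)=\sup_{g\in G}l_{\mathcal P}(g)$. *)

theory Defs
  imports Main "HOL-Library.Extended_Nat"
begin

text \<open>The restricted wreath product Z wr Z = (direct sum over Z of Z) semidirect Z.
  An element is a pair (f, n) with f :: int \<Rightarrow> int finitely supported (the base
  part) and n :: int (the acting part).\<close>

type_synonym wr = "(int \<Rightarrow> int) \<times> int"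

definition wr_carrier :: "wr set" where
  "wr_carrier = {(f, n). finite {x. f x \<noteq> 0}}"

definition wr_mult :: "wr \<Rightarrow> wr \<Rightarrow> wr" where
  "wr_mult p q = (\<lambda>x. fst p x + fst q (x - snd p), snd p + snd q)"

definition wr_one :: wr where
  "wr_one = (\<lambda>_. 0, 0)"

definition wr_inv :: "wr \<Rightarrow> wr" where
  "wr_inv p = (\<lambda>x. - fst p (x + snd p), - snd p)"

definition wr_a :: wr where
  "wr_a = ((\<lambda>x. if x = 0 then 1 else 0), 0)"

definition wr_b :: wr where
  "wr_b = ((\<lambda>_. 0), 1)"

text \<open>Letters of the alphabet {a, b, a^-1, b^-1}: (gen, positive) where gen = True
  means a, gen = False means b; positive = False means the inverse letter.\<close>
type_synonym letter = "bool \<times> bool"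

definition letter_val :: "letter \<Rightarrow> wr" where
  "letter_val l = (let g = (if fst l then wr_a else wr_b) in if snd l then g else wr_inv g)"

fun word_val :: "letter list \<Rightarrow> wr" where
  "word_val [] = wr_one"
| "word_val (l # w) = wr_mult (letter_val l) (word_val w)"

fun reduced_word :: "letter list \<Rightarrow> bool" where
  "reduced_word (l1 # l2 # w) = (\<not> (fst l1 = fst l2 \<and> snd l1 \<noteq> snd l2) \<and> reduced_word (l2 # w))"
| "reduced_word _ = True"

definition palindrome :: "wr \<Rightarrow> bool" where
  "palindrome g \<longleftrightarrow> (\<exists>w. reduced_word w \<and> rev w = w \<and> word_val w = g)"

fun wr_prod :: "wr list \<Rightarrow> wr" where
  "wr_prod [] = wr_one"
| "wr_prod (p # ps) = wr_mult p (wr_prod ps)"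

text \<open>Palindromic length (infinite if g is not a product of palindromes).\<close>
definition pal_length :: "wr \<Rightarrow> enat" where
  "pal_length g = (INF n \<in> {n. \<exists>ps. length ps = n \<and> (\<forall>p\<in>set ps. palindrome p) \<and> wr_prod ps = g}. enat n)"

definition pal_width :: enat where
  "pal_width = (SUP g \<in> wr_carrier. pal_length g)"

end

theory Submission
  imports Defs
begin

lemma mult_one_left[simp]: "wr_mult wr_one q = q"
  by (simp add: wr_mult_def wr_one_def)

lemma mult_one_right[simp]: "wr_mult q wr_one = q"
  by (simp add: wr_mult_def wr_one_def)

lemma mult_assoc: "wr_mult (wr_mult p q) r = wr_mult p (wr_mult q r)"
  by (simp add: wr_mult_def fun_eq_iff algebra_simps)

lemma word_val_append: "word_val (u @ v) = wr_mult (word_val u) (word_val v)"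
  by (induction u) (simp_all add: mult_assoc)

definition rv :: "wr \<Rightarrow> wr" where
  "rv g = (\<lambda>x. fst g (snd g - x), snd g)"

lemma rv_mult: "rv (wr_mult p q) = wr_mult (rv q) (rv p)"
  by (simp add: rv_def wr_mult_def fun_eq_iff algebra_simps)

lemma rv_letter: "rv (letter_val l) = letter_val l"
  by (cases l) (auto simp: rv_def letter_val_def wr_a_def wr_b_def wr_inv_def fun_eq_iff Let_def)

lemma word_val_rev: "word_val (rev w) = rv (word_val w)"
proof (induction w)
  case Nil
  then show ?case by (simp add: rv_def wr_one_def)
next
  case (Cons l w)
  then show ?case by (simp add: word_val_append rv_mult rv_letter)
qed

lemma palindrome_sym:
  assumes "palindrome g" shows "fst g x = fst g (snd g - x)"
proof -
  obtain w where "rev w = w" "word_val w = g" using assms palindrome_def by auto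
  then have "g = rv g" using word_val_rev by metis
  then show ?thesis by (metis fst_conv rv_def)
qed

definition cancel :: "letter \<Rightarrow> letter \<Rightarrow> bool" where
  "cancel l1 l2 = (fst l1 = fst l2 \<and> snd l1 \<noteq> snd l2)"

lemma reduced_cons: "reduced_word (l # w) \<longleftrightarrow> (w \<noteq> [] \<longrightarrow> \<not> cancel l (hd w)) \<and> reduced_word w"
  by (cases w) (auto simp: cancel_def)

lemma reduced_append: "reduced_word (u @ v) \<longleftrightarrow> reduced_word u \<and> reduced_word v \<and>
   (u \<noteq> [] \<longrightarrow> v \<noteq> [] \<longrightarrow> \<not> cancel (last u) (hd v))"
proof (induction u)
  case Nil
  then show ?case by simp
next
  case (Cons l u)
  then show ?case
    by (cases "u = []") (auto simp: reduced_cons)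
qed

lemma reduced_replicate: "reduced_word (replicate n l)"
  by (induction n) (auto simp: reduced_cons cancel_def)

definition apow :: "int \<Rightarrow> letter list" where
  "apow c = replicate (nat \<bar>c\<bar>) (True, c \<ge> 0)"

definition bpow :: "int \<Rightarrow> letter list" where
  "bpow c = replicate (nat \<bar>c\<bar>) (False, c \<ge> 0)"

lemma val_rep_a: "word_val (replicate n (True, s)) = ((\<lambda>x. if x = 0 then (if s then int n else - int n) else 0), 0)"
  by (induction n) (auto simp: letter_val_def wr_a_def wr_inv_def wr_mult_def wr_one_def fun_eq_iff)

lemma val_rep_b: "word_val (replicate n (False, s)) = ((\<lambda>x. 0), (if s then int n else - int n))"
  by (induction n) (auto simp: letter_val_def wr_b_def wr_inv_def wr_mult_def wr_one_def fun_eq_iff)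

lemma val_apow: "word_val (apow c) = ((\<lambda>x. if x = 0 then c else 0), 0)"
  by (auto simp: apow_def val_rep_a fun_eq_iff)

lemma val_bpow: "word_val (bpow c) = ((\<lambda>x. 0), c)"
  by (auto simp: bpow_def val_rep_b)

fun W :: "int list \<Rightarrow> letter list" where
  "W [] = []"
| "W [c] = apow c"
| "W (c # d # cs) = apow c @ (False, True) # W (d # cs)"

lemma W_letters: "l \<in> set (W cs) \<Longrightarrow> fst l \<or> snd l"
  by (induction cs rule: W.induct) (auto simp: apow_def)

lemma reduced_W: "reduced_word (W cs)"
proof (induction cs rule: W.induct)
  case (3 c d cs)
  have "W (d # cs) \<noteq> [] \<longrightarrow> \<not> cancel (False, True) (hd (W (d # cs)))"
    using W_letters[of "hd (W (d # cs))" "d # cs"] by (auto simp: cancel_def)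
  then show ?case using 3
    by (auto simp: reduced_append reduced_cons apow_def reduced_replicate cancel_def)
qed (auto simp: apow_def reduced_replicate)

lemma W_append: "cs \<noteq> [] \<Longrightarrow> ds \<noteq> [] \<Longrightarrow> W (cs @ ds) = W cs @ (False, True) # W ds"
proof (induction cs rule: W.induct)
  case (2 c)
  then show ?case by (cases ds) auto
qed auto

lemma rev_W: "rev (W cs) = W (rev cs)"
proof (induction cs)
  case (Cons c cs)
  show ?case
  proof (cases "cs = []")
    case True
    then show ?thesis by (simp add: apow_def)
  next
    case False
    have "W (c # cs) = W ([c] @ cs)" by simp
    also have "\<dots> = apow c @ (False, True) # W cs" using False W_append[of "[c]" cs] by simp
    finally have "rev (W (c # cs)) = W (rev cs) @ (False, True) # apow c"
      using Cons by (simp add: apow_def)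
    also have "\<dots> = W (rev cs @ [c])" using False W_append[of "rev cs" "[c]"] by simp
    finally show ?thesis by simp
  qed
qed simp

lemma hd_W: "cs \<noteq> [] \<Longrightarrow> hd cs \<noteq> 0 \<Longrightarrow> W cs \<noteq> [] \<and> fst (hd (W cs))"
  by (induction cs rule: W.induct) (auto simp: apow_def)

lemma last_W: assumes "cs \<noteq> []" "last cs \<noteq> 0" shows "W cs \<noteq> [] \<and> fst (last (W cs))"
proof -
  have "W (rev cs) \<noteq> [] \<and> fst (hd (W (rev cs)))"
    using hd_W[of "rev cs"] assms by (simp add: hd_rev)
  then show ?thesis by (metis Nil_is_rev_conv hd_rev rev_W rev_rev_ident)
qed

lemma val_W: "cs \<noteq> [] \<Longrightarrow> word_val (W cs) =
  ((\<lambda>x. if 0 \<le> x \<and> x < int (length cs) then cs ! nat x else 0), int (length cs) - 1)"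
proof (induction cs rule: W.induct)
  case (2 c)
  then show ?case by (auto simp: val_apow fun_eq_iff)
next
  case (3 c d cs)
  have e: "word_val (W (c # d # cs)) = wr_mult (word_val (apow c))
     (wr_mult (letter_val (False, True)) (word_val (W (d # cs))))"
    by (simp add: word_val_append)
  show ?case unfolding e 3[simplified]
    apply (simp add: val_apow letter_val_def wr_b_def wr_mult_def fun_eq_iff)
    apply (auto simp: nth_Cons' nat_diff_distrib)
    done
qed simp

lemma sym_palindrome:
  assumes fin: "finite {x. f x \<noteq> 0}" and sym: "\<And>x. f x = f (p - x)"
  shows "palindrome (f, p)"
proof (cases "\<forall>x. f x = 0")
  case True
  have "f = (\<lambda>x. 0)" using True by auto
  then show ?thesis unfolding palindrome_def
    by (intro exI[of _ "bpow p"]) (simp add: bpow_def reduced_replicate val_rep_b)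
next
  case False
  define S where "S = {x. f x \<noteq> 0}"
  define lo where "lo = Min S"
  have "S \<noteq> {}" using False S_def by auto
  have flo: "f lo \<noteq> 0" using Min_in[OF fin[folded S_def] \<open>S \<noteq> {}\<close>] lo_def S_def by auto
  have below: "\<And>x. f x \<noteq> 0 \<Longrightarrow> lo \<le> x" using fin S_def lo_def by auto
  have "lo \<le> p - lo" using below[of "p - lo"] flo sym[of lo] by auto
  define L where "L = nat (p - 2 * lo + 1)"
  have L: "int L = p - 2 * lo + 1" "L \<ge> 1" using \<open>lo \<le> p - lo\<close> L_def by auto
  define cs where "cs = map (\<lambda>i. f (lo + int i)) [0..<L]"
  have lcs: "length cs = L" by (simp add: cs_def)
  have csne: "cs \<noteq> []" using L lcs by auto
  have revcs: "rev cs = cs"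
  proof (rule nth_equalityI)
    fix i assume "i < length (rev cs)"
    then have i: "i < L" by (simp add: lcs)
    have "rev cs ! i = cs ! (L - 1 - i)" using i lcs by (simp add: rev_nth)
    also have "\<dots> = f (lo + int (L - 1 - i))" using i by (simp add: cs_def)
    also have "lo + int (L - 1 - i) = p - (lo + int i)" using i L by (simp add: of_nat_diff)
    also have "f (p - (lo + int i)) = cs ! i" using i sym by (simp add: cs_def)
    finally show "rev cs ! i = cs ! i" .
  qed simp
  have hdcs: "hd cs \<noteq> 0" using flo L by (simp add: cs_def hd_map upt_conv_Cons)
  have lastcs: "last cs \<noteq> 0" using hdcs revcs csne by (metis hd_rev)
  define w where "w = bpow lo @ W cs @ bpow lo"
  have "rev w = w" unfolding w_def by (simp add: rev_W revcs bpow_def)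
  moreover have "reduced_word w"
    using hd_W[OF csne hdcs] last_W[OF csne lastcs]
    unfolding w_def
    by (auto simp: reduced_append reduced_W reduced_replicate bpow_def cancel_def)
  moreover have "word_val w = (f, p)"
  proof -
    have "word_val w = wr_mult ((\<lambda>x. 0), lo) (wr_mult (word_val (W cs)) ((\<lambda>x. 0), lo))"
      unfolding w_def by (simp add: word_val_append val_bpow)
    also have "\<dots> = (f, p)"
    apply (simp add: val_W[OF csne] wr_mult_def fun_eq_iff lcs L)
    proof (intro allI conjI impI)
      fix x
      assume a: "lo \<le> x \<and> lo + x \<le> p"
      then have "nat (x - lo) < L" using L by linarith
      then show "cs ! nat (x - lo) = f x" using a by (simp add: cs_def)
    next
      fix x
      assume "lo \<le> x \<longrightarrow> \<not> lo + x \<le> p"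
      then consider "x < lo" | "p - x < lo" by linarith
      then show "f x = 0"
      proof cases
        case 1 then show ?thesis using below by force
      next
        case 2 then show ?thesis using below sym[of x] by force
      qed
    qed
    finally show ?thesis .
  qed
  ultimately show ?thesis unfolding palindrome_def by blast
qed

lemma three_pals:
  assumes fin: "finite {x. h x \<noteq> 0}"
  shows "\<exists>ps. length ps = 3 \<and> (\<forall>p\<in>set ps. palindrome p) \<and> wr_prod ps = (h, N)"
proof -
  define S where "S = {x. h x \<noteq> 0}"
  define K where "K = Max (insert 0 (abs ` S))"
  have bnd: "\<And>y. h y \<noteq> 0 \<Longrightarrow> -K \<le> y \<and> y \<le> K"
  proof -
    fix y assume "h y \<noteq> 0"
    then have "\<bar>y\<bar> \<le> K" unfolding K_def using fin S_def by (intro Max_ge) auto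
    then show "-K \<le> y \<and> y \<le> K" by auto
  qed
  define T where "T x = sum h {y. h y \<noteq> 0 \<and> x \<le> y}" for x
  define St where "St = sum h S"
  have Tstep: "T x = h x + T (x + 1)" for x
  proof (cases "h x = 0")
    case True
    have "{y. h y \<noteq> 0 \<and> x \<le> y} = {y. h y \<noteq> 0 \<and> x + 1 \<le> y}"
      using True by (auto, metis order.order_iff_strict zless_imp_add1_zle)
    then show ?thesis using True by (simp add: T_def)
  next
    case False
    have e: "{y. h y \<noteq> 0 \<and> x \<le> y} = insert x {y. h y \<noteq> 0 \<and> x + 1 \<le> y}" using False by force
    have "finite {y. h y \<noteq> 0 \<and> x + 1 \<le> y}" using fin by (rule finite_subset[rotated]) auto
    then show ?thesis unfolding T_def e by (subst sum.insert) auto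
  qed
  have Thigh: "x > K \<Longrightarrow> T x = 0" for x
  proof -
    assume "x > K"
    then have "{y. h y \<noteq> 0 \<and> x \<le> y} = {}" using bnd by force
    then show ?thesis unfolding T_def by (metis sum.empty)
  qed
  have Tlow: "x \<le> -K \<Longrightarrow> T x = St" for x
  proof -
    assume "x \<le> -K"
    then have "{y. h y \<noteq> 0 \<and> x \<le> y} = S" using bnd S_def by force
    then show ?thesis by (simp add: T_def St_def)
  qed
  define B where "B x = T x + T (1 - x) - St" for x
  define A where "A x = h x - B x" for x
  have Bsym: "B x = B (1 - x)" for x by (simp add: B_def)
  have Asym: "A x = A (0 - x)" for x
    using Tstep[of x] Tstep[of "-x"] by (simp add: A_def B_def algebra_simps)
  have Bsupp: "{x. B x \<noteq> 0} \<subseteq> {-K..K}"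
  proof
    fix x assume "x \<in> {x. B x \<noteq> 0}"
    then have "B x \<noteq> 0" by simp
    moreover have "x > K \<Longrightarrow> B x = 0" using Thigh Tlow by (simp add: B_def)
    moreover have "x < -K \<Longrightarrow> B x = 0" using Thigh Tlow by (simp add: B_def)
    ultimately show "x \<in> {-K..K}" by force
  qed
  have Bfin: "finite {x. B x \<noteq> 0}" using Bsupp finite_subset by blast
  have Afin: "finite {x. A x \<noteq> 0}"
    using fin Bfin by (rule finite_subset[rotated, OF finite_UnI]) (auto simp: A_def)
  have P1: "palindrome (A, 0)" using sym_palindrome[OF Afin] Asym by blast
  have P2: "palindrome (B, 1)" using sym_palindrome[OF Bfin] Bsym by blast
  have P3: "palindrome ((\<lambda>x. 0), N - 1)" by (rule sym_palindrome) auto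
  have "wr_prod [(A, 0), (B, 1), ((\<lambda>x. 0), N - 1)] = (h, N)"
    by (simp add: wr_mult_def fun_eq_iff A_def wr_one_def)
  then show ?thesis using P1 P2 P3
    by (intro exI[of _ "[(A, 0), (B, 1), ((\<lambda>x. 0), N - 1)]"]) auto
qed

definition g0 :: wr where
  "g0 = ((\<lambda>x. if x = 0 then 1 else if x = 1 then 2 else 0), 0)"

lemma g0_not:
  assumes "\<forall>p\<in>set ps. palindrome p" "wr_prod ps = g0"
  shows "length ps \<ge> 3"
proof (rule ccontr)
  assume "\<not> length ps \<ge> 3"
  then consider "ps = []" | p where "ps = [p]" | p q where "ps = [p, q]"
    by (cases ps; cases "tl ps"; cases "tl (tl ps)") auto
  then show False
  proof cases
    case 1
    then have "g0 = ((\<lambda>_. 0), 0)" using assms by (auto simp: wr_one_def)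
    then have "fst g0 0 = 0" by (metis fst_conv)
    then show ?thesis by (simp add: g0_def)
  next
    case 2
    then have "p = g0" "palindrome p" using assms by auto
    then show ?thesis using palindrome_sym[of g0 1] by (simp add: g0_def)
  next
    case 3
    then have pq: "wr_mult p q = g0" "palindrome p" "palindrome q" using assms by auto
    obtain f n where p: "p = (f, n)" by (cases p)
    obtain g m where q: "q = (g, m)" by (cases q)
    have sf: "f x = f (n - x)" for x using palindrome_sym[OF pq(2), of x] p by simp
    have sg: "g x = g (m - x)" for x using palindrome_sym[OF pq(3), of x] q by simp
    have e: "g0 = (\<lambda>x. f x + g (x - n), n + m)" using pq(1) p q by (simp add: wr_mult_def)
    have hv: "f x + g (x - n) = fst g0 x" for x by (subst e) simp
    have nm: "n + m = 0" using e by (simp add: g0_def)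
    have hsym: "fst g0 x = fst g0 (n - x)" for x
    proof -
      have "m - (x - n) = - x" using nm by simp
      moreover have "n - x - n = - x" by simp
      ultimately show ?thesis using hv[of x] hv[of "n - x"] sf[of x] sg[of "x - n"] by metis
    qed
    have "fst g0 n = 1" using hsym[of 0] by (simp add: g0_def)
    then have "n = 0" by (simp add: g0_def split: if_splits)
    then show ?thesis using hsym[of 1] by (simp add: g0_def)
  qed
qed

theorem theorem5p7:
  shows "pal_width = 3"
proof (rule antisym)
  show "pal_width \<le> 3" unfolding pal_width_def
  proof (rule SUP_least)
    fix g assume "g \<in> wr_carrier"
    then obtain h N where g: "g = (h, N)" "finite {x. h x \<noteq> 0}" by (auto simp: wr_carrier_def)
    then have "3 \<in> {n. \<exists>ps. length ps = n \<and> (\<forall>p\<in>set ps. palindrome p) \<and> wr_prod ps = g}"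
      using three_pals by auto
    then have "pal_length g \<le> enat 3" unfolding pal_length_def by (rule INF_lower)
    then show "pal_length g \<le> 3" by (simp add: numeral_eq_enat)
  qed
next
  have "g0 \<in> wr_carrier" unfolding wr_carrier_def g0_def
    by (auto intro: finite_subset[of _ "{0, 1}"])
  moreover have "3 \<le> pal_length g0" unfolding pal_length_def
    by (rule INF_greatest) (use g0_not in \<open>auto simp: numeral_eq_enat\<close>)
  ultimately show "3 \<le> pal_width" unfolding pal_width_def
    by (meson SUP_upper order_trans)
qed

end
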